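(* In the setting of the context, fix $\alpha\in G_F$, and let $U\in\mathrm{Bis}(G)$ and $n\in C_0(U)$ satisfy $\alpha\in U$ and $n(\alpha)\neq0$. Then $|\varphi(n)(\Phi(\alpha))|=|n(\alpha)|$, and the value $\varphi(n)(\Phi(\alpha))/n(\alpha)\in\mathbb{T}$ does not depend on the choice of $U$ and $n$.
   Context: $G$ is an étale groupoid, $H$ an effective étale groupoid (étale groupoids are locally compact Hausdorff with $d$ a local homeomorphism; effective means the interior of the isotropy equals the unit space), $\varphi\colon C^*_r(G)\to C^*_r(H)$ a *-homomorphism of reduced groupoid C*-algebras with $\varphi(C_0(G^{(0)}))\subset C_0(H^{(0)})$ an ideal of $C_0(H^{(0)})$. Elements of $C^*_r$ are regarded as functions on the groupoid via the standard evaluation map. $\mathrm{Bis}(G)$ is the set of open bisections and $C_0(U)$ the closure of $C_c(U)$ in $C^*_r(G)$. $F\subset G^{(0)}$ is the closed invariant set with $\ker\varphi\cap C_0(G^{(0)})=C_0(G^{(0)}\setminus F)$, $G_F=d^{-1}(F)$. $\psi\colon\mathrm{Bis}(G)\to\mathrm{Bis}(H)$ is the semigroup homomorphism with $\varphi(C_0(U))=C_0(\psi(U))$. $\sigma\colon F\to H^{(0)}$ is the homeomorphism onto the open set $V$ with $\varphi(C_0(G^{(0)}))=C_0(V)$ determined by $\varphi(f)(\sigma(x))=f(x)$ for $f\in C_0(G^{(0)})$, $x\in F$. $\Phi\colon G_F\to H$ is the groupoid homomorphism given by: for $\alpha\in G_F$ and any $U\in\mathrm{Bis}(G)$ with $\alpha\in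 U$, $\Phi(\alpha)$ is the unique $\delta\in\psi(U)$ with $d(\delta)=\sigma(d(\alpha))$ (this exists and is independent of $U$). *)

theory Defs
  imports "HOL-Analysis.Analysis"
begin

section \<open>Topological groupoids (the topology of the groupoid is the topology of the type)\<close>

record 'a groupoid =
  gunits :: "'a set"
  gdom   :: "'a \<Rightarrow> 'a"
  gran   :: "'a \<Rightarrow> 'a"
  gmult  :: "'a \<Rightarrow> 'a \<Rightarrow> 'a"
  ginv   :: "'a \<Rightarrow> 'a"

definition groupoid :: "('a, 'm) groupoid_scheme \<Rightarrow> bool" where
  "groupoid G \<longleftrightarrow>
     (\<forall>g. gdom G g \<in> gunits G \<and> gran G g \<in> gunits G) \<and>
     (\<forall>u\<in>gunits G. gdom G u = u \<and> gran G u = u) \<and>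
     (\<forall>g h. gdom G g = gran G h \<longrightarrow>
        gdom G (gmult G g h) = gdom G h \<and> gran G (gmult G g h) = gran G g) \<and>
     (\<forall>g h k. gdom G g = gran G h \<longrightarrow> gdom G h = gran G k \<longrightarrow>
        gmult G (gmult G g h) k = gmult G g (gmult G h k)) \<and>
     (\<forall>g. gmult G g (gdom G g) = g \<and> gmult G (gran G g) g = g) \<and>
     (\<forall>g. gdom G (ginv G g) = gran G g \<and> gran G (ginv G g) = gdom G g \<and>
          gmult G g (ginv G g) = gran G g \<and> gmult G (ginv G g) g = gdom G g)"

text \<open>Etale groupoid: locally compact Hausdorff topological groupoid whose source map d is a
  local homeomorphism. Hausdorffness is imposed by the type class t2_space.\<close>
definition etale_groupoid :: "('a::t2_space, 'm) groupoid_scheme \<Rightarrow> bool" where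
  "etale_groupoid G \<longleftrightarrow>
     groupoid G \<and>
     locally_compact_space (euclidean :: 'a topology) \<and>
     continuous_on UNIV (gdom G) \<and> continuous_on UNIV (gran G) \<and>
     continuous_on UNIV (ginv G) \<and>
     continuous_on {(g, h). gdom G g = gran G h} (\<lambda>(g, h). gmult G g h) \<and>
     (\<forall>g. \<exists>U. open U \<and> g \<in> U \<and> open (gdom G ` U) \<and>
            (\<exists>e. homeomorphism U (gdom G ` U) (gdom G) e))"

definition effective :: "('a::topological_space, 'm) groupoid_scheme \<Rightarrow> bool" where
  "effective G \<longleftrightarrow> interior {g. gdom G g = gran G g} = gunits G"

definition Bis :: "('a::topological_space, 'm) groupoid_scheme \<Rightarrow> 'a set set" where
  "Bis G = {U. open U \<and> inj_on (gdom G) U \<and> inj_on (gran G) U}"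

definition Cc_on :: "'a::topological_space set \<Rightarrow> ('a \<Rightarrow> complex) set" where
  "Cc_on U = {f. continuous_on UNIV f \<and> compact (closure {x. f x \<noteq> 0}) \<and>
                 closure {x. f x \<noteq> 0} \<subseteq> U}"

text \<open>Left regular representation at a unit x on l2(G_x), G_x = d^{-1}(x).\<close>
definition lreg :: "('a, 'm) groupoid_scheme \<Rightarrow> ('a \<Rightarrow> complex) \<Rightarrow> ('a \<Rightarrow> complex) \<Rightarrow> 'a \<Rightarrow> complex" where
  "lreg G f \<xi> \<gamma> = (\<Sum>\<^sub>\<infinity>\<eta>\<in>{\<eta>. gdom G \<eta> = gdom G \<gamma>}. f (gmult G \<gamma> (ginv G \<eta>)) * \<xi> \<eta>)"

definition l2norm :: "'a set \<Rightarrow> ('a \<Rightarrow> complex) \<Rightarrow> real" where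
  "l2norm S \<xi> = sqrt (\<Sum>\<^sub>\<infinity>\<eta>\<in>S. (cmod (\<xi> \<eta>))\<^sup>2)"

definition in_l2 :: "'a set \<Rightarrow> ('a \<Rightarrow> complex) \<Rightarrow> bool" where
  "in_l2 S \<xi> \<longleftrightarrow> (\<lambda>\<eta>. (cmod (\<xi> \<eta>))\<^sup>2) summable_on S"

definition lreg_norm :: "('a, 'm) groupoid_scheme \<Rightarrow> ('a \<Rightarrow> complex) \<Rightarrow> 'a \<Rightarrow> real" where
  "lreg_norm G f x = Sup {l2norm {\<gamma>. gdom G \<gamma> = x} (lreg G f \<xi>) | \<xi>.
       in_l2 {\<eta>. gdom G \<eta> = x} \<xi> \<and> l2norm {\<eta>. gdom G \<eta> = x} \<xi> \<le> 1}"

text \<open>Reduced norm (meaningful on C_c(G)).\<close>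
definition rnorm :: "('a, 'm) groupoid_scheme \<Rightarrow> ('a \<Rightarrow> complex) \<Rightarrow> real" where
  "rnorm G f = Sup (lreg_norm G f ` gunits G)"

text \<open>C_0(U) for an open set U: the closure of C_c(U) in the reduced C*-algebra, each element
  being identified with its image under the (injective) evaluation map j, i.e. with the
  pointwise (indeed uniform) limit of an approximating sequence.\<close>
definition C0 :: "('a::topological_space, 'm) groupoid_scheme \<Rightarrow> 'a set \<Rightarrow> ('a \<Rightarrow> complex) set" where
  "C0 G U = {f. \<exists>s. (\<forall>n. s n \<in> Cc_on U) \<and>
                   (\<forall>e>0. \<exists>N. \<forall>m\<ge>N. \<forall>n\<ge>N. rnorm G (\<lambda>\<gamma>. s m \<gamma> - s n \<gamma>) < e) \<and>
                   (\<forall>\<gamma>. (\<lambda>n. s n \<gamma>) \<longlonglongrightarrow> f \<gamma>)}"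

abbreviation Cr :: "('a::topological_space, 'm) groupoid_scheme \<Rightarrow> ('a \<Rightarrow> complex) set" where
  "Cr G \<equiv> C0 G UNIV"

definition conv :: "('a, 'm) groupoid_scheme \<Rightarrow> ('a \<Rightarrow> complex) \<Rightarrow> ('a \<Rightarrow> complex) \<Rightarrow> 'a \<Rightarrow> complex" where
  "conv G a b \<gamma> = (\<Sum>\<^sub>\<infinity>\<eta>\<in>{\<eta>. gran G \<eta> = gran G \<gamma>}. a \<eta> * b (gmult G (ginv G \<eta>) \<gamma>))"

definition cstar :: "('a, 'm) groupoid_scheme \<Rightarrow> ('a \<Rightarrow> complex) \<Rightarrow> 'a \<Rightarrow> complex" where
  "cstar G a \<gamma> = cnj (a (ginv G \<gamma>))"

definition star_hom ::
  "('a::topological_space, 'm) groupoid_scheme \<Rightarrow> ('b::topological_space, 'n) groupoid_scheme \<Rightarrow>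
   (('a \<Rightarrow> complex) \<Rightarrow> ('b \<Rightarrow> complex)) \<Rightarrow> bool" where
  "star_hom G H \<phi> \<longleftrightarrow>
     (\<forall>a\<in>Cr G. \<phi> a \<in> Cr H) \<and>
     (\<forall>a\<in>Cr G. \<forall>b\<in>Cr G. \<phi> (\<lambda>\<gamma>. a \<gamma> + b \<gamma>) = (\<lambda>\<delta>. \<phi> a \<delta> + \<phi> b \<delta>)) \<and>
     (\<forall>a\<in>Cr G. \<forall>c. \<phi> (\<lambda>\<gamma>. c * a \<gamma>) = (\<lambda>\<delta>. c * \<phi> a \<delta>)) \<and>
     (\<forall>a\<in>Cr G. \<forall>b\<in>Cr G. \<phi> (conv G a b) = conv H (\<phi> a) (\<phi> b)) \<and>
     (\<forall>a\<in>Cr G. \<phi> (cstar G a) = cstar H (\<phi> a))"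

end

theory Submission
  imports Defs
begin

lemma cutoff:
  fixes W :: "'a::t2_space set"
  assumes lc: "locally_compact_space (euclidean :: 'a topology)" and W: "open W" "a \<in> W"
  shows "\<exists>k::'a\<Rightarrow>real. continuous_on UNIV k \<and> k a = 1 \<and> (\<forall>x. \<bar>k x\<bar> \<le> 1) \<and>
            compact (closure {x. k x \<noteq> 0}) \<and> closure {x. k x \<noteq> 0} \<subseteq> W"
proof -
  have H: "Hausdorff_space (euclidean :: 'a topology)"
  proof -
    have "\<exists>U V. open U \<and> open V \<and> x \<in> U \<and> y \<in> V \<and> disjnt U V" if "x \<noteq> y" for x y :: 'a
      using hausdorff[OF that] unfolding disjnt_def by blast
    then show ?thesis unfolding Hausdorff_space_def by simp
  qed
  have R: "regular_space (euclidean :: 'a topology)"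
    using locally_compact_Hausdorff_imp_regular_space[OF lc H] .
  have CR: "completely_regular_space (euclidean :: 'a topology)"
    using iffD2[OF completely_regular_eq_regular_space[OF lc] R] .
  have NB: "neighbourhood_base_of (compactin euclidean) (euclidean :: 'a topology)"
    using iffD1[OF locally_compact_space_neighbourhood_base[OF disjI1[OF H]] lc] .
  obtain V K where VK: "open V" "compact K" "a \<in> V" "V \<subseteq> K" "K \<subseteq> W"
  proof -
    have "openin euclidean W" using W by simp
    then obtain V K where "openin euclidean V" "compactin euclidean K" "a \<in> V" "V \<subseteq> K" "K \<subseteq> W"
      using NB[unfolded neighbourhood_base_of, rule_format, of W a] W(2) by blast
    then show ?thesis by (intro that[of V K]) (simp_all add: compactin_euclidean_iff)
  qed
  have "closedin euclidean (- V)" by (metis VK(1) closed_Compl closed_closedin)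
  then obtain f :: "'a \<Rightarrow> real" where f: "continuous_map euclidean (top_of_set {0..1}) f"
      "f a = 0" "f ` (- V) \<subseteq> {1}"
  proof -
    have "a \<in> topspace euclidean - (- V)" using VK(3) by simp
    then show ?thesis using CR \<open>closedin euclidean (- V)\<close> that unfolding completely_regular_space_def by blast
  qed
  have fc: "continuous_on UNIV f" and f01: "\<And>x. f x \<in> {0..1}"
    using f(1) by (auto simp: continuous_map_in_subtopology)
  define k where "k x = 1 - f x" for x
  have sub: "{x. k x \<noteq> 0} \<subseteq> V" using f(3) by (auto simp: k_def)
  have cl: "closure {x. k x \<noteq> 0} \<subseteq> K"
    using closure_minimal[OF order_trans[OF sub VK(4)] compact_imp_closed[OF VK(2)]] .
  show ?thesis
  proof (intro exI conjI allI)
    show "continuous_on UNIV k" unfolding k_def by (intro continuous_intros fc)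
    show "k a = 1" by (simp add: k_def f(2))
    show "\<bar>k x\<bar> \<le> 1" for x using f01[of x] by (auto simp: k_def)
    show "compact (closure {x. k x \<noteq> 0})"
      using compact_Int_closed[OF VK(2) closed_closure[of "{x. k x \<noteq> 0}"]] cl by (simp add: Int_absorb1)
    show "closure {x. k x \<noteq> 0} \<subseteq> W" using cl VK by auto
  qed
qed



locale grpd =
  fixes G :: "('a::t2_space, 'm) groupoid_scheme"
  assumes grp: "groupoid G"
begin

abbreviation "d \<equiv> gdom G"
abbreviation "r \<equiv> gran G"
abbreviation "mm \<equiv> gmult G"
abbreviation "iv \<equiv> ginv G"

lemma d_unit[simp]: "d g \<in> gunits G" and r_unit[simp]: "r g \<in> gunits G"
  using grp unfolding groupoid_def by auto
lemma unit_d: "u \<in> gunits G \<Longrightarrow> d u = u" and unit_r: "u \<in> gunits G \<Longrightarrow> r u = u"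
  using grp unfolding groupoid_def by auto
lemma dd[simp]: "d (d g) = d g" and rd[simp]: "r (d g) = d g" and dr[simp]: "d (r g) = r g" and rr[simp]: "r (r g) = r g"
  using unit_d unit_r d_unit r_unit by auto
lemma comp_d: "d g = r h \<Longrightarrow> d (mm g h) = d h" and comp_r: "d g = r h \<Longrightarrow> r (mm g h) = r g"
  using grp unfolding groupoid_def by auto
lemma assoc: "d g = r h \<Longrightarrow> d h = r k \<Longrightarrow> mm (mm g h) k = mm g (mm h k)"
  using grp unfolding groupoid_def by blast
lemma mult_d[simp]: "mm g (d g) = g" and mult_r[simp]: "mm (r g) g = g"
  using grp unfolding groupoid_def by auto
lemma inv_d[simp]: "d (iv g) = r g" and inv_r[simp]: "r (iv g) = d g"
  and inv_right[simp]: "mm g (iv g) = r g" and inv_left[simp]: "mm (iv g) g = d g"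
  using grp unfolding groupoid_def by auto

lemma inv_inv[simp]: "iv (iv g) = g"
proof -
  have "iv (iv g) = mm (iv (iv g)) (d g)" by (metis mult_d inv_d inv_r)
  also have "\<dots> = mm (iv (iv g)) (mm (iv g) g)" by simp
  also have "\<dots> = mm (mm (iv (iv g)) (iv g)) g" by (rule assoc[symmetric]) simp_all
  also have "\<dots> = g" by simp
  finally show ?thesis .
qed

lemma cancel_left:
  assumes "d a = r b" "d a = r c" "mm a b = mm a c" shows "b = c"
proof -
  have "b = mm (mm (iv a) a) b" using assms by simp
  also have "\<dots> = mm (iv a) (mm a b)" by (rule assoc) (use assms in simp_all)
  also have "\<dots> = mm (iv a) (mm a c)" using assms by simp
  also have "\<dots> = mm (mm (iv a) a) c" by (rule assoc[symmetric]) (use assms in simp_all)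
  also have "\<dots> = c" using assms by (metis inv_left mult_r)
  finally show ?thesis .
qed

lemma inv_inj: "iv a = iv b \<Longrightarrow> a = b" by (metis inv_inv)

end



definition bisl :: "('a, 'm) groupoid_scheme \<Rightarrow> 'a set \<Rightarrow> bool" where
  "bisl G B \<longleftrightarrow> inj_on (gdom G) B \<and> inj_on (gran G) B"

context grpd begin

lemma lreg_some:
  assumes B: "bisl G B" and van: "\<And>x. x \<notin> B \<Longrightarrow> f x = 0"
    and bB: "b \<in> B" and rb: "r b = r \<gamma>"
  shows "lreg G f \<xi> \<gamma> = f b * \<xi> (mm (iv b) \<gamma>)"
proof -
  define e where "e = mm (iv b) \<gamma>"
  have de: "d e = d \<gamma>" unfolding e_def by (rule comp_d) (simp add: rb)
  have re: "r e = d b" unfolding e_def by (subst comp_r) (simp_all add: rb)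
  have be: "mm b e = \<gamma>"
  proof -
    have "mm b e = mm (mm b (iv b)) \<gamma>" unfolding e_def by (rule assoc[symmetric]) (simp_all add: rb)
    also have "\<dots> = \<gamma>" by (simp add: rb)
    finally show ?thesis .
  qed
  have ge: "mm \<gamma> (iv e) = b"
  proof -
    have "mm \<gamma> (iv e) = mm (mm b e) (iv e)" by (simp add: be)
    also have "\<dots> = mm b (mm e (iv e))" by (rule assoc) (simp_all add: re)
    also have "\<dots> = b" by (simp add: re)
    finally show ?thesis .
  qed
  have zero: "f (mm \<gamma> (iv \<eta>)) * \<xi> \<eta> = 0" if "d \<eta> = d \<gamma>" "\<eta> \<noteq> e" for \<eta>
  proof (cases "mm \<gamma> (iv \<eta>) \<in> B")
    case False then show ?thesis using van by simp
  next
    case True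
    have r1: "r (mm \<gamma> (iv \<eta>)) = r \<gamma>" by (rule comp_r) (simp add: that)
    have eqb: "mm \<gamma> (iv \<eta>) = b"
      using B True bB r1 rb unfolding bisl_def inj_on_def by metis
    have d1: "d b = r \<eta>" using eqb comp_d[of \<gamma> "iv \<eta>"] that by simp
    have "mm b \<eta> = mm (mm \<gamma> (iv \<eta>)) \<eta>" by (simp add: eqb)
    also have "\<dots> = mm \<gamma> (mm (iv \<eta>) \<eta>)" by (rule assoc) (simp_all add: that)
    also have "\<dots> = \<gamma>" using that by (metis inv_left mult_d)
    finally have "mm b \<eta> = mm b e" using be by simp
    then have "\<eta> = e" by (rule cancel_left[rotated 2]) (simp_all add: d1 re)
    with that show ?thesis by simp
  qed
  have "lreg G f \<xi> \<gamma> = infsum (\<lambda>\<eta>. f (mm \<gamma> (iv \<eta>)) * \<xi> \<eta>) {e}"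
    unfolding lreg_def by (rule infsum_cong_neutral) (use zero de in auto)
  also have "\<dots> = f b * \<xi> e" by (simp add: ge)
  finally show ?thesis by (simp add: e_def)
qed

lemma lreg_none:
  assumes van: "\<And>x. x \<notin> B \<Longrightarrow> f x = 0" and no: "\<not> (\<exists>b\<in>B. r b = r \<gamma>)"
  shows "lreg G f \<xi> \<gamma> = 0"
proof -
  have "f (mm \<gamma> (iv \<eta>)) * \<xi> \<eta> = 0" if "d \<eta> = d \<gamma>" for \<eta>
  proof -
    have "r (mm \<gamma> (iv \<eta>)) = r \<gamma>" by (rule comp_r) (simp add: that)
    then have "mm \<gamma> (iv \<eta>) \<notin> B" using no by blast
    then show ?thesis using van by simp
  qed
  then show ?thesis unfolding lreg_def by (intro infsum_0) auto
qed

end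


context grpd begin

lemma lreg_l2:
  assumes B: "bisl G B" and van: "\<And>z. z \<notin> B \<Longrightarrow> f z = 0"
    and M: "\<And>z. cmod (f z) \<le> M" and xi: "in_l2 {\<eta>. d \<eta> = x} \<xi>"
  shows "(\<lambda>\<gamma>. (cmod (lreg G f \<xi> \<gamma>))\<^sup>2) summable_on {\<eta>. d \<eta> = x} \<and>
         infsum (\<lambda>\<gamma>. (cmod (lreg G f \<xi> \<gamma>))\<^sup>2) {\<eta>. d \<eta> = x}
           \<le> M\<^sup>2 * infsum (\<lambda>\<eta>. (cmod (\<xi> \<eta>))\<^sup>2) {\<eta>. d \<eta> = x}"
proof -
  let ?S = "{\<eta>. d \<eta> = x}"
  let ?q = "\<lambda>\<eta>. (cmod (\<xi> \<eta>))\<^sup>2"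
  let ?L = "\<lambda>\<gamma>. (cmod (lreg G f \<xi> \<gamma>))\<^sup>2"
  define bt where "bt \<gamma> = (SOME b. b \<in> B \<and> r b = r \<gamma>)" for \<gamma>
  define P where "P = {\<gamma>\<in>?S. \<exists>b\<in>B. r b = r \<gamma>}"
  define h where "h \<gamma> = mm (iv (bt \<gamma>)) \<gamma>" for \<gamma>
  have bt: "bt \<gamma> \<in> B \<and> r (bt \<gamma>) = r \<gamma>" if "\<gamma> \<in> P" for \<gamma>
    using that unfolding P_def bt_def by (metis (mono_tags, lifting) mem_Collect_eq someI_ex)
  have Lh: "lreg G f \<xi> \<gamma> = f (bt \<gamma>) * \<xi> (h \<gamma>)" if "\<gamma> \<in> P" for \<gamma>
    unfolding h_def by (rule lreg_some[where f=f, OF B]) (use van bt[OF that] in auto)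
  have L0: "lreg G f \<xi> \<gamma> = 0" if "\<gamma> \<in> ?S - P" for \<gamma>
    by (rule lreg_none[where f=f and B=B]) (use van that in \<open>auto simp: P_def\<close>)
  have dh: "d (h \<gamma>) = d \<gamma>" if "\<gamma> \<in> P" for \<gamma>
    unfolding h_def by (rule comp_d) (use bt[OF that] in simp)
  have rh: "r (h \<gamma>) = d (bt \<gamma>)" if "\<gamma> \<in> P" for \<gamma>
    unfolding h_def by (subst comp_r) (use bt[OF that] in simp_all)
  have hS: "h ` P \<subseteq> ?S" using dh unfolding P_def by auto
  have injh: "inj_on h P"
  proof (rule inj_onI)
    fix \<gamma> \<gamma>' assume g: "\<gamma> \<in> P" "\<gamma>' \<in> P" and e: "h \<gamma> = h \<gamma>'"
    have "d (bt \<gamma>) = d (bt \<gamma>')" using rh[OF g(1)] rh[OF g(2)] e by simp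
    then have bb: "bt \<gamma> = bt \<gamma>'" using B bt[OF g(1)] bt[OF g(2)] unfolding bisl_def inj_on_def by blast
    have "mm (iv (bt \<gamma>)) \<gamma> = mm (iv (bt \<gamma>)) \<gamma>'" using e bb unfolding h_def by simp
    then show "\<gamma> = \<gamma>'" by (rule cancel_left[rotated 2]) (use bt[OF g(1)] bt[OF g(2)] bb in simp_all)
  qed
  have q_sum: "?q summable_on ?S" using xi unfolding in_l2_def .
  have q_hP: "?q summable_on (h ` P)" by (rule summable_on_subset[OF q_sum hS])
  have qh: "(?q \<circ> h) summable_on P" using q_hP summable_on_reindex[OF injh] by blast
  have Mqh: "(\<lambda>\<gamma>. M\<^sup>2 * (?q \<circ> h) \<gamma>) summable_on P" by (rule summable_on_cmult_right[OF qh])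
  have Lle: "?L \<gamma> \<le> M\<^sup>2 * (?q \<circ> h) \<gamma>" if "\<gamma> \<in> P" for \<gamma>
  proof -
    have "?L \<gamma> = (cmod (f (bt \<gamma>)))\<^sup>2 * (cmod (\<xi> (h \<gamma>)))\<^sup>2"
      by (simp add: Lh[OF that] norm_mult power_mult_distrib)
    also have "\<dots> \<le> M\<^sup>2 * (cmod (\<xi> (h \<gamma>)))\<^sup>2"
      by (intro mult_right_mono power_mono M) simp_all
    finally show ?thesis by simp
  qed
  have LP: "?L summable_on P" by (rule summable_on_comparison_test[OF Mqh]) (use Lle in auto)
  have PS: "P \<subseteq> ?S" unfolding P_def by auto
  have eqS: "infsum ?L ?S = infsum ?L P" and sumS: "?L summable_on ?S \<longleftrightarrow> ?L summable_on P"
    by (intro infsum_cong_neutral summable_on_cong_neutral; use L0 PS in auto)+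
  have "infsum ?L P \<le> infsum (\<lambda>\<gamma>. M\<^sup>2 * (?q \<circ> h) \<gamma>) P"
    by (rule infsum_mono[OF LP Mqh Lle])
  also have "\<dots> = M\<^sup>2 * infsum (?q \<circ> h) P" by (rule infsum_cmult_right[OF qh])
  also have "\<dots> = M\<^sup>2 * infsum ?q (h ` P)" by (simp add: infsum_reindex[OF injh])
  also have "\<dots> \<le> M\<^sup>2 * infsum ?q ?S"
    by (intro mult_left_mono infsum_mono2[OF q_hP q_sum hS]) simp_all
  finally show ?thesis using eqS sumS LP by simp
qed

end


context grpd begin

lemma units_ne: "gunits G \<noteq> {}" using d_unit by blast

lemma lreg_elem_le:
  assumes B: "bisl G B" and van: "\<And>z. z \<notin> B \<Longrightarrow> f z = 0"
    and M: "\<And>z. cmod (f z) \<le> M"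
    and xi: "in_l2 {\<eta>. d \<eta> = x} \<xi>" "l2norm {\<eta>. d \<eta> = x} \<xi> \<le> 1"
  shows "l2norm {\<eta>. d \<eta> = x} (lreg G f \<xi>) \<le> M"
proof -
  have M0: "0 \<le> M" using M[of undefined] norm_ge_zero order_trans by blast
  let ?S = "{\<eta>. d \<eta> = x}"
    have q0: "0 \<le> infsum (\<lambda>\<eta>. (cmod (\<xi> \<eta>))\<^sup>2) ?S" by (intro infsum_nonneg) simp
    have q1: "infsum (\<lambda>\<eta>. (cmod (\<xi> \<eta>))\<^sup>2) ?S \<le> 1"
      using xi(2) q0 unfolding l2norm_def by (metis real_sqrt_le_1_iff)
    have "infsum (\<lambda>\<gamma>. (cmod (lreg G f \<xi> \<gamma>))\<^sup>2) ?S \<le> M\<^sup>2 * infsum (\<lambda>\<eta>. (cmod (\<xi> \<eta>))\<^sup>2) ?S"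
      using lreg_l2[where f=f, OF B van M xi(1)] by blast
    also have "\<dots> \<le> M\<^sup>2" using q1 by (simp add: mult_left_le)
    finally have "l2norm ?S (lreg G f \<xi>) \<le> sqrt (M\<^sup>2)" unfolding l2norm_def by (rule real_sqrt_le_mono)
    then show ?thesis using M0 by simp
qed

lemma lreg_norm_le:
  assumes B: "bisl G B" and van: "\<And>z. z \<notin> B \<Longrightarrow> f z = 0"
    and M: "\<And>z. cmod (f z) \<le> M"
  shows "lreg_norm G f x \<le> M"
proof -
  have M0: "0 \<le> M" using M[of undefined] norm_ge_zero order_trans by blast
  let ?S = "{\<eta>. d \<eta> = x}"
  let ?A = "{l2norm ?S (lreg G f \<xi>) | \<xi>. in_l2 ?S \<xi> \<and> l2norm ?S \<xi> \<le> 1}"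
  have ne: "?A \<noteq> {}"
  proof -
    have "in_l2 ?S (\<lambda>_. 0) \<and> l2norm ?S (\<lambda>_. 0) \<le> 1"
      by (simp add: in_l2_def l2norm_def)
    then show ?thesis by blast
  qed
  have "a \<le> M" if "a \<in> ?A" for a
    using that lreg_elem_le[where f=f, OF B van M] by blast
  then show ?thesis unfolding lreg_norm_def by (intro cSup_least[OF ne]) blast
qed

lemma rnorm_le:
  assumes B: "bisl G B" and van: "\<And>z. z \<notin> B \<Longrightarrow> f z = 0"
    and M: "\<And>z. cmod (f z) \<le> M"
  shows "rnorm G f \<le> M"
  unfolding rnorm_def using lreg_norm_le[where f=f, OF B van M] units_ne by (intro cSup_least) auto

lemma rnorm_ge:
  assumes B: "bisl G B" and van: "\<And>z. z \<notin> B \<Longrightarrow> f z = 0"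
    and M: "\<And>z. cmod (f z) \<le> M" and bB: "b \<in> B"
  shows "cmod (f b) \<le> rnorm G f"
proof -
  define x where "x = d b"
  let ?S = "{\<eta>. d \<eta> = x}"
  define \<xi> :: "'a \<Rightarrow> complex" where "\<xi> \<eta> = (if \<eta> = x then 1 else 0)" for \<eta>
  have xS: "x \<in> ?S" by (simp add: x_def)
  have qeq: "infsum (\<lambda>\<eta>. (cmod (\<xi> \<eta>))\<^sup>2) ?S = infsum (\<lambda>\<eta>. (cmod (\<xi> \<eta>))\<^sup>2) {x}"
    by (rule infsum_cong_neutral) (use xS in \<open>auto simp: \<xi>_def\<close>)
  have l2: "in_l2 ?S \<xi>" unfolding in_l2_def
    by (subst summable_on_cong_neutral[where T="{x}" and g="\<lambda>\<eta>. (cmod (\<xi> \<eta>))\<^sup>2"]) (use xS in \<open>auto simp: \<xi>_def\<close>)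
  have n1: "l2norm ?S \<xi> \<le> 1" unfolding l2norm_def qeq by (simp add: \<xi>_def)
  have lb: "lreg G f \<xi> b = f b"
    by (subst lreg_some[where f=f, OF B _ bB]) (use van in \<open>auto simp: \<xi>_def x_def\<close>)
  have bS: "b \<in> ?S" by (simp add: x_def)
  obtain sm: "(\<lambda>\<gamma>. (cmod (lreg G f \<xi> \<gamma>))\<^sup>2) summable_on ?S"
    using lreg_l2[where f=f, OF B van M l2] by blast
  have "(cmod (f b))\<^sup>2 \<le> infsum (\<lambda>\<gamma>. (cmod (lreg G f \<xi> \<gamma>))\<^sup>2) ?S"
    using finite_sum_le_infsum[OF sm, of "{b}"] bS lb by simp
  then have "cmod (f b) \<le> l2norm ?S (lreg G f \<xi>)"
    unfolding l2norm_def by (metis norm_ge_zero real_le_rsqrt)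
  also have "\<dots> \<le> lreg_norm G f x"
    unfolding lreg_norm_def
  proof (rule cSup_upper)
    show "l2norm ?S (lreg G f \<xi>) \<in> {l2norm ?S (lreg G f \<xi>) | \<xi>. in_l2 ?S \<xi> \<and> l2norm ?S \<xi> \<le> 1}"
      using l2 n1 by blast
    show "bdd_above {l2norm ?S (lreg G f \<xi>) | \<xi>. in_l2 ?S \<xi> \<and> l2norm ?S \<xi> \<le> 1}"
      using lreg_elem_le[where f=f, OF B van M] by (intro bdd_aboveI[where M=M]) blast
  qed
  also have "\<dots> \<le> rnorm G f"
    unfolding rnorm_def
  proof (rule cSup_upper)
    show "lreg_norm G f x \<in> lreg_norm G f ` gunits G" by (simp add: x_def)
    show "bdd_above (lreg_norm G f ` gunits G)"
      using lreg_norm_le[where f=f, OF B van M] by (intro bdd_aboveI2) blast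
  qed
  finally show ?thesis .
qed

end


context grpd begin

lemma conv_at:
  assumes B: "bisl G B" and van: "\<And>z. z \<notin> B \<Longrightarrow> a z = 0" and bB: "b \<in> B"
  shows "conv G (cstar G a) a (d b) = cnj (a b) * a b"
proof -
  have z: "cstar G a \<eta> * a (mm (iv \<eta>) (d b)) = 0" if "r \<eta> = r (d b)" "\<eta> \<noteq> iv b" for \<eta>
  proof (cases "iv \<eta> \<in> B")
    case True
    have "d (iv \<eta>) = d b" using that by simp
    then have "iv \<eta> = b" using B True bB unfolding bisl_def inj_on_def by blast
    then show ?thesis using that by auto
  next
    case False then show ?thesis by (simp add: cstar_def van)
  qed
  have "conv G (cstar G a) a (d b) = infsum (\<lambda>\<eta>. cstar G a \<eta> * a (mm (iv \<eta>) (d b))) {iv b}"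
    unfolding conv_def by (rule infsum_cong_neutral) (use z in auto)
  also have "\<dots> = cnj (a b) * a b" by (simp add: cstar_def)
  finally show ?thesis .
qed

lemma conv_zero:
  assumes B: "bisl G B" and van: "\<And>z. z \<notin> B \<Longrightarrow> a z = 0"
    and no: "\<not> (\<exists>b\<in>B. d b = \<gamma>)"
  shows "conv G (cstar G a) a \<gamma> = 0"
proof -
  have "cstar G a \<eta> * a (mm (iv \<eta>) \<gamma>) = 0" if "r \<eta> = r \<gamma>" for \<eta>
  proof (rule ccontr)
    assume ne: "cstar G a \<eta> * a (mm (iv \<eta>) \<gamma>) \<noteq> 0"
    then have i1: "iv \<eta> \<in> B" and i2: "mm (iv \<eta>) \<gamma> \<in> B" using van by (auto simp: cstar_def)
    have "r (mm (iv \<eta>) \<gamma>) = r (iv \<eta>)" by (rule comp_r) (simp add: that)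
    then have e: "mm (iv \<eta>) \<gamma> = iv \<eta>" using B i1 i2 unfolding bisl_def inj_on_def by blast
    have "mm (iv \<eta>) \<gamma> = mm (iv \<eta>) (d (iv \<eta>))" using e by (metis mult_d)
    then have "\<gamma> = d (iv \<eta>)" by (rule cancel_left[rotated 2]) (simp_all add: that)
    then show False using no i1 by blast
  qed
  then show ?thesis unfolding conv_def by (intro infsum_0) auto
qed

end


lemma Cc_van: assumes "f \<in> Cc_on U" "x \<notin> U" shows "f x = 0"
proof -
  have "closure {x. f x \<noteq> 0} \<subseteq> U" using assms(1) unfolding Cc_on_def by simp
  then have "x \<notin> closure {x. f x \<noteq> 0}" using assms(2) by (rule contra_subsetD)
  then have "x \<notin> {x. f x \<noteq> 0}" by (rule contra_subsetD[OF closure_subset])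
  then show ?thesis by simp
qed

lemma Cc_bdd: assumes "f \<in> Cc_on U" shows "\<exists>M. \<forall>x. cmod (f x) \<le> M"
proof -
  let ?K = "closure {x. f x \<noteq> 0}"
  have K: "compact ?K" and c: "continuous_on UNIV f" using assms unfolding Cc_on_def by auto
  have cK: "compact (f ` ?K)" by (rule compact_continuous_image[OF continuous_on_subset[OF c] K]) simp
  obtain a where a: "\<And>y. y \<in> f ` ?K \<Longrightarrow> norm y \<le> a" using compact_imp_bounded[OF cK] unfolding bounded_iff by blast
  have "cmod (f x) \<le> max a 0" for x
  proof (cases "x \<in> ?K")
    case True then show ?thesis using a by fastforce
  next
    case False then have "x \<notin> {x. f x \<noteq> 0}" by (rule contra_subsetD[OF closure_subset])
    then have "f x = 0" by simp
    then show ?thesis by simp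
  qed
  then show ?thesis by blast
qed

lemma supp_ok:
  fixes h :: "'a::t2_space \<Rightarrow> 'b::zero"
  assumes "compact K" "{x. h x \<noteq> 0} \<subseteq> K" "K \<subseteq> U"
  shows "compact (closure {x. h x \<noteq> 0}) \<and> closure {x. h x \<noteq> 0} \<subseteq> U"
proof -
  have cl: "closure {x. h x \<noteq> 0} \<subseteq> K" by (rule closure_minimal[OF assms(2) compact_imp_closed[OF assms(1)]])
  have "compact (K \<inter> closure {x. h x \<noteq> 0})" by (rule compact_Int_closed[OF assms(1) closed_closure])
  then show ?thesis using cl assms(3) by (simp add: Int_absorb1)
qed

lemma Cc_lin:
  fixes U :: "'a::t2_space set"
  assumes f: "f \<in> Cc_on U" and g: "g \<in> Cc_on U"
  shows "(\<lambda>x. a * f x + b * g x) \<in> Cc_on U"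
proof -
  let ?K = "closure {x. f x \<noteq> 0} \<union> closure {x. g x \<noteq> 0}"
  have "compact ?K" "?K \<subseteq> U" using f g unfolding Cc_on_def by auto
  moreover have "{x. a * f x + b * g x \<noteq> 0} \<subseteq> ?K"
  proof
    fix x assume x: "x \<in> {x. a * f x + b * g x \<noteq> 0}"
    show "x \<in> ?K"
    proof (rule ccontr)
      assume "x \<notin> ?K"
      then have "x \<notin> {x. f x \<noteq> 0}" "x \<notin> {x. g x \<noteq> 0}"
        using closure_subset[of "{x. f x \<noteq> 0}"] closure_subset[of "{x. g x \<noteq> 0}"] by auto
      then show False using x by simp
    qed
  qed
  moreover have "continuous_on UNIV (\<lambda>x. a * f x + b * g x)"
    using f g unfolding Cc_on_def by (intro continuous_intros) auto
  ultimately show ?thesis using supp_ok[of ?K "\<lambda>x. a * f x + b * g x" U] unfolding Cc_on_def by blast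
qed

lemma Cc_cut:
  fixes W :: "'a::t2_space set"
  assumes f: "f \<in> Cc_on U" and k: "continuous_on UNIV k" "compact (closure {x. k x \<noteq> 0})"
    "closure {x. (k x::real) \<noteq> 0} \<subseteq> W"
  shows "(\<lambda>x. f x * of_real (k x)) \<in> Cc_on W"
proof -
  have "{x. f x * of_real (k x) \<noteq> 0} \<subseteq> {x. k x \<noteq> 0}" by auto
  then have sub: "{x. f x * of_real (k x) \<noteq> 0} \<subseteq> closure {x. k x \<noteq> 0}"
    using closure_subset[of "{x. k x \<noteq> 0}"] by (rule order_trans)
  moreover have "continuous_on UNIV (\<lambda>x. f x * of_real (k x))"
    using f k unfolding Cc_on_def by (intro continuous_intros) auto
  moreover note supp_ok[OF k(2) sub k(3)]
  ultimately show ?thesis unfolding Cc_on_def by blast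
qed

lemma Cc_mono: "U \<subseteq> U' \<Longrightarrow> Cc_on U \<subseteq> Cc_on U'"
  unfolding Cc_on_def by (intro Collect_mono impI) (elim conjE, intro conjI, assumption+, rule order_trans)

lemma C0_mono: assumes "U \<subseteq> U'" shows "C0 G U \<subseteq> C0 G U'"
proof
  fix f assume "f \<in> C0 G U"
  then obtain s where "\<forall>n. s n \<in> Cc_on U" "(\<forall>e>0. \<exists>N. \<forall>m\<ge>N. \<forall>n\<ge>N. rnorm G (\<lambda>\<gamma>. s m \<gamma> - s n \<gamma>) < e)"
      "(\<forall>\<gamma>. (\<lambda>n. s n \<gamma>) \<longlonglongrightarrow> f \<gamma>)" unfolding C0_def by blast
  moreover have "\<forall>n. s n \<in> Cc_on U'" using calculation(1) Cc_mono[OF assms] by blast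
  ultimately show "f \<in> C0 G U'" unfolding C0_def by blast
qed

lemma C0_van: assumes "f \<in> C0 G U" "x \<notin> U" shows "f x = 0"
proof -
  obtain s where s: "\<And>n. s n \<in> Cc_on U" "(\<lambda>n. s n x) \<longlonglongrightarrow> f x" using assms(1) unfolding C0_def by blast
  have "s n x = 0" for n using Cc_van[OF s(1) assms(2)] .
  then have "(\<lambda>n. 0) \<longlonglongrightarrow> f x" using s(2) by simp
  then show ?thesis using LIMSEQ_unique[OF _ tendsto_const] by metis
qed

definition ucs :: "'a::topological_space set \<Rightarrow> (nat \<Rightarrow> 'a \<Rightarrow> complex) \<Rightarrow> bool" where
  "ucs B s \<longleftrightarrow> (\<forall>k. s k \<in> Cc_on B) \<and> (\<forall>e>0. \<exists>N. \<forall>m\<ge>N. \<forall>k\<ge>N. \<forall>\<gamma>. cmod (s m \<gamma> - s k \<gamma>) < e)"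

context grpd begin

lemma C0_uc:
  assumes B: "bisl G B"
  shows "f \<in> C0 G B \<longleftrightarrow> (\<exists>s. ucs B s \<and> (\<forall>\<gamma>. (\<lambda>k. s k \<gamma>) \<longlonglongrightarrow> f \<gamma>))"
proof
  assume "f \<in> C0 G B"
  then obtain s where s: "\<And>n. s n \<in> Cc_on B"
    "\<And>e. e>0 \<Longrightarrow> \<exists>N. \<forall>m\<ge>N. \<forall>n\<ge>N. rnorm G (\<lambda>\<gamma>. s m \<gamma> - s n \<gamma>) < e"
    "\<And>\<gamma>. (\<lambda>n. s n \<gamma>) \<longlonglongrightarrow> f \<gamma>" unfolding C0_def by blast
  have "\<exists>N. \<forall>m\<ge>N. \<forall>k\<ge>N. \<forall>\<gamma>. cmod (s m \<gamma> - s k \<gamma>) < e" if e: "e > 0" for e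
  proof -
    obtain N where N: "\<And>m n. m \<ge> N \<Longrightarrow> n \<ge> N \<Longrightarrow> rnorm G (\<lambda>\<gamma>. s m \<gamma> - s n \<gamma>) < e" using s(2)[OF e] by blast
    have "cmod (s m \<gamma> - s k \<gamma>) < e" if mk: "m \<ge> N" "k \<ge> N" for m k \<gamma>
    proof (cases "\<gamma> \<in> B")
      case False then show ?thesis using Cc_van[OF s(1)] e by simp
    next
      case True
      obtain M1 where M1: "\<And>x. cmod (s m x) \<le> M1" using Cc_bdd[OF s(1)] by blast
      obtain M2 where M2: "\<And>x. cmod (s k x) \<le> M2" using Cc_bdd[OF s(1)] by blast
      have "cmod (s m \<gamma> - s k \<gamma>) \<le> rnorm G (\<lambda>\<gamma>. s m \<gamma> - s k \<gamma>)"
      proof (rule rnorm_ge[where f="\<lambda>\<gamma>. s m \<gamma> - s k \<gamma>", OF B _ _ True])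
        show "\<And>z. z \<notin> B \<Longrightarrow> s m z - s k z = 0" using Cc_van[OF s(1)] by simp
        show "cmod (s m z - s k z) \<le> M1 + M2" for z
          using norm_triangle_ineq4[of "s m z" "s k z"] M1[of z] M2[of z] by simp
      qed
      then show ?thesis using N[OF mk] by simp
    qed
    then show ?thesis by blast
  qed
  then show "\<exists>s. ucs B s \<and> (\<forall>\<gamma>. (\<lambda>k. s k \<gamma>) \<longlonglongrightarrow> f \<gamma>)" using s unfolding ucs_def by blast
next
  assume "\<exists>s. ucs B s \<and> (\<forall>\<gamma>. (\<lambda>k. s k \<gamma>) \<longlonglongrightarrow> f \<gamma>)"
  then obtain s where s: "\<And>n. s n \<in> Cc_on B"
    "\<And>e. e>0 \<Longrightarrow> \<exists>N. \<forall>m\<ge>N. \<forall>k\<ge>N. \<forall>\<gamma>. cmod (s m \<gamma> - s k \<gamma>) < e"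
    "\<And>\<gamma>. (\<lambda>n. s n \<gamma>) \<longlonglongrightarrow> f \<gamma>" unfolding ucs_def by blast
  have "\<exists>N. \<forall>m\<ge>N. \<forall>n\<ge>N. rnorm G (\<lambda>\<gamma>. s m \<gamma> - s n \<gamma>) < e" if e: "e > 0" for e
  proof -
    obtain N where N: "\<And>m k \<gamma>. m \<ge> N \<Longrightarrow> k \<ge> N \<Longrightarrow> cmod (s m \<gamma> - s k \<gamma>) < e/2"
      using s(2)[of "e/2"] e by auto
    have "rnorm G (\<lambda>\<gamma>. s m \<gamma> - s k \<gamma>) \<le> e/2" if "m \<ge> N" "k \<ge> N" for m k
      by (rule rnorm_le[where f="\<lambda>\<gamma>. s m \<gamma> - s k \<gamma>", OF B]) (use Cc_van[OF s(1)] N[OF that] in \<open>auto intro: less_imp_le\<close>)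
    moreover have "e/2 < e" using e by simp
    ultimately show ?thesis by (meson le_less_trans)
  qed
  then show "f \<in> C0 G B" unfolding C0_def using s by blast
qed

lemma C0_lin:
  assumes B: "bisl G B" and a: "f \<in> C0 G B" and b: "g \<in> C0 G B"
  shows "(\<lambda>\<gamma>. x * f \<gamma> + y * g \<gamma>) \<in> C0 G B"
proof -
  obtain s where s: "ucs B s" "\<And>\<gamma>. (\<lambda>k. s k \<gamma>) \<longlonglongrightarrow> f \<gamma>" using a C0_uc[OF B] by blast
  obtain t where t: "ucs B t" "\<And>\<gamma>. (\<lambda>k. t k \<gamma>) \<longlonglongrightarrow> g \<gamma>" using b C0_uc[OF B] by blast
  define u where "u k \<gamma> = x * s k \<gamma> + y * t k \<gamma>" for k \<gamma>
  have "ucs B u"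
    unfolding ucs_def
  proof (intro conjI allI impI)
    show "u k \<in> Cc_on B" for k unfolding u_def using s(1) t(1) by (intro Cc_lin) (auto simp: ucs_def)
    fix e :: real assume e: "e > 0"
    define c where "c = cmod x + cmod y + 1"
    have c: "c > 0" unfolding c_def by (simp add: add_nonneg_pos)
    obtain N1 where N1: "\<And>m k \<gamma>. m \<ge> N1 \<Longrightarrow> k \<ge> N1 \<Longrightarrow> cmod (s m \<gamma> - s k \<gamma>) < e / c"
      using s(1) e c unfolding ucs_def by (meson divide_pos_pos)
    obtain N2 where N2: "\<And>m k \<gamma>. m \<ge> N2 \<Longrightarrow> k \<ge> N2 \<Longrightarrow> cmod (t m \<gamma> - t k \<gamma>) < e / c"
      using t(1) e c unfolding ucs_def by (meson divide_pos_pos)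
    have "cmod (u m \<gamma> - u k \<gamma>) < e" if "m \<ge> max N1 N2" "k \<ge> max N1 N2" for m k \<gamma>
    proof -
      have "u m \<gamma> - u k \<gamma> = x * (s m \<gamma> - s k \<gamma>) + y * (t m \<gamma> - t k \<gamma>)" unfolding u_def by (simp add: algebra_simps)
      then have "cmod (u m \<gamma> - u k \<gamma>) \<le> cmod x * cmod (s m \<gamma> - s k \<gamma>) + cmod y * cmod (t m \<gamma> - t k \<gamma>)"
        by (metis norm_mult norm_triangle_ineq)
      also have "\<dots> \<le> cmod x * (e / c) + cmod y * (e / c)"
        using N1[of m k \<gamma>] N2[of m k \<gamma>] that by (intro add_mono mult_left_mono) auto
      also have "\<dots> = (cmod x + cmod y) * (e / c)" by (simp add: distrib_right add_divide_distrib)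
      also have "\<dots> < c * (e / c)" using e c by (intro mult_strict_right_mono) (simp_all add: c_def)
      also have "\<dots> = e" using c by simp
      finally show ?thesis .
    qed
    then show "\<exists>N. \<forall>m\<ge>N. \<forall>k\<ge>N. \<forall>\<gamma>. cmod (u m \<gamma> - u k \<gamma>) < e" by blast
  qed
  moreover have "(\<lambda>k. u k \<gamma>) \<longlonglongrightarrow> x * f \<gamma> + y * g \<gamma>" for \<gamma>
    unfolding u_def by (intro tendsto_intros s(2) t(2))
  ultimately show ?thesis using C0_uc[OF B] by blast
qed

end


locale etl = grpd +
  assumes et: "etale_groupoid G"
begin

lemma cont_d: "continuous_on UNIV d" and cont_iv: "continuous_on UNIV iv"
  and lcs: "locally_compact_space (euclidean :: 'a topology)"
  using et unfolding etale_groupoid_def by auto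

lemma d_open: assumes Oo: "open Oo" shows "open (d ` Oo)"
proof (subst open_subopen, intro ballI)
  fix y assume "y \<in> d ` Oo"
  then obtain g where g: "g \<in> Oo" "y = d g" by blast
  obtain V e where V: "open V" "g \<in> V" "open (d ` V)" "homeomorphism V (d ` V) d e"
    using et unfolding etale_groupoid_def by metis
  have "openin (top_of_set V) (Oo \<inter> V)" using Oo by (simp add: openin_open) blast
  then have "openin (top_of_set (d ` V)) (d ` (Oo \<inter> V))" by (rule homeomorphism_imp_open_map[OF V(4)])
  then have "open (d ` (Oo \<inter> V))" using V(3) by (rule openin_open_trans)
  moreover have "y \<in> d ` (Oo \<inter> V)" using g V by blast
  moreover have "d ` (Oo \<inter> V) \<subseteq> d ` Oo" by blast
  ultimately show "\<exists>T. open T \<and> y \<in> T \<and> T \<subseteq> d ` Oo" by blast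
qed

lemma Bis_bisl: "U \<in> Bis G \<Longrightarrow> bisl G U"
  unfolding Bis_def bisl_def by simp

lemma bis_homeo:
  assumes U: "U \<in> Bis G"
  obtains e where "homeomorphism U (d ` U) d e" "open (d ` U)"
proof -
  have oU: "open U" and inj: "inj_on d U" using U unfolding Bis_def by auto
  have oo: "openin (top_of_set (d ` U)) (d ` V)" if "openin (top_of_set U) V" for V
  proof -
    have "open V" using that oU by (rule openin_open_trans)
    then have "open (d ` V)" by (rule d_open)
    moreover have "d ` V \<subseteq> d ` U" using openin_imp_subset[OF that] by blast
    ultimately show ?thesis by (metis Int_absorb1 openin_open_Int inf.commute)
  qed
  obtain e where "homeomorphism U (d ` U) d e"
    using homeomorphism_injective_open_map[OF continuous_on_subset[OF cont_d] refl inj oo] by auto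
  moreover have "open (d ` U)" using oU by (rule d_open)
  ultimately show ?thesis using that by blast
qed

lemma bisl_inv: assumes "bisl G U" shows "bisl G (iv ` U)"
proof -
  have "inj_on d (iv ` U)"
  proof (rule inj_onI)
    fix x y assume "x \<in> iv ` U" "y \<in> iv ` U" "d x = d y"
    then obtain a b where "a \<in> U" "b \<in> U" "x = iv a" "y = iv b" "r a = r b" by auto
    then show "x = y" using assms unfolding bisl_def inj_on_def by metis
  qed
  moreover have "inj_on r (iv ` U)"
  proof (rule inj_onI)
    fix x y assume "x \<in> iv ` U" "y \<in> iv ` U" "r x = r y"
    then obtain a b where "a \<in> U" "b \<in> U" "x = iv a" "y = iv b" "d a = d b" by auto
    then show "x = y" using assms unfolding bisl_def inj_on_def by metis
  qed
  ultimately show ?thesis unfolding bisl_def by simp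
qed

lemma bisl_units: "bisl G (gunits G)"
  unfolding bisl_def inj_on_def using unit_d unit_r by metis

lemma Cc_cstar:
  assumes s: "s \<in> Cc_on U"
  shows "cstar G s \<in> Cc_on (iv ` U)"
proof -
  let ?K = "closure {x. s x \<noteq> 0}"
  have K: "compact ?K" "?K \<subseteq> U" and cs: "continuous_on UNIV s" using s unfolding Cc_on_def by auto
  have cK: "compact (iv ` ?K)" by (rule compact_continuous_image[OF continuous_on_subset[OF cont_iv] K(1)]) simp
  have sub: "{x. cstar G s x \<noteq> 0} \<subseteq> iv ` ?K"
  proof
    fix x assume "x \<in> {x. cstar G s x \<noteq> 0}"
    then have "iv x \<in> {x. s x \<noteq> 0}" by (simp add: cstar_def)
    then have "iv x \<in> ?K" using closure_subset by (rule subsetD[rotated])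
    then have "iv (iv x) \<in> iv ` ?K" by (rule imageI)
    then show "x \<in> iv ` ?K" by simp
  qed
  have "continuous_on UNIV (cstar G s)"
  proof -
    have "continuous_on UNIV (s \<circ> iv)" by (rule continuous_on_compose[OF cont_iv continuous_on_subset[OF cs]]) simp
    then show ?thesis unfolding cstar_def comp_def by (intro continuous_intros)
  qed
  moreover have "iv ` ?K \<subseteq> iv ` U" using K(2) by (rule image_mono)
  moreover note supp_ok[OF cK sub this]
  ultimately show ?thesis unfolding Cc_on_def by blast
qed

lemma C0_cstar:
  assumes U: "bisl G U" and n: "n \<in> C0 G U"
  shows "cstar G n \<in> C0 G (iv ` U)"
proof -
  obtain s where s: "ucs U s" "\<And>\<gamma>. (\<lambda>k. s k \<gamma>) \<longlonglongrightarrow> n \<gamma>" using n C0_uc[OF U] by blast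
  define t where "t k = cstar G (s k)" for k
  have "ucs (iv ` U) t"
    unfolding ucs_def
  proof (intro conjI allI impI)
    show "t k \<in> Cc_on (iv ` U)" for k unfolding t_def using s(1) by (intro Cc_cstar) (simp add: ucs_def)
    fix e :: real assume e: "e > 0"
    obtain N where N: "\<And>m k \<gamma>. m \<ge> N \<Longrightarrow> k \<ge> N \<Longrightarrow> cmod (s m \<gamma> - s k \<gamma>) < e"
      using s(1) e unfolding ucs_def by meson
    have "cmod (t m \<gamma> - t k \<gamma>) < e" if "m \<ge> N" "k \<ge> N" for m k \<gamma>
    proof -
      have "t m \<gamma> - t k \<gamma> = cnj (s m (iv \<gamma>) - s k (iv \<gamma>))" by (simp add: t_def cstar_def)
      then have "cmod (t m \<gamma> - t k \<gamma>) = cmod (s m (iv \<gamma>) - s k (iv \<gamma>))" by (simp only: complex_mod_cnj)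
      then show ?thesis using N[OF that, of "iv \<gamma>"] by simp
    qed
    then show "\<exists>N. \<forall>m\<ge>N. \<forall>k\<ge>N. \<forall>\<gamma>. cmod (t m \<gamma> - t k \<gamma>) < e" by blast
  qed
  moreover have "(\<lambda>k. t k \<gamma>) \<longlonglongrightarrow> cstar G n \<gamma>" for \<gamma>
    unfolding t_def cstar_def by (intro tendsto_cnj s(2))
  ultimately show ?thesis using C0_uc[OF bisl_inv[OF U]] by blast
qed

lemma C0_cut:
  assumes U: "bisl G U" and W: "bisl G W" and n: "n \<in> C0 G U"
    and k: "continuous_on UNIV k" "compact (closure {x. k x \<noteq> 0})"
    "closure {x. (k x::real) \<noteq> 0} \<subseteq> W" "\<And>x. \<bar>k x\<bar> \<le> 1"
  shows "(\<lambda>\<gamma>. n \<gamma> * of_real (k \<gamma>)) \<in> C0 G W"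
proof -
  obtain s where s: "ucs U s" "\<And>\<gamma>. (\<lambda>j. s j \<gamma>) \<longlonglongrightarrow> n \<gamma>" using n C0_uc[OF U] by blast
  define t where "t j \<gamma> = s j \<gamma> * of_real (k \<gamma>)" for j \<gamma>
  have "ucs W t"
    unfolding ucs_def
  proof (intro conjI allI impI)
    show "t j \<in> Cc_on W" for j unfolding t_def using s(1) k(1-3)
      by (intro Cc_cut[where U=U]) (simp_all add: ucs_def)
    fix e :: real assume e: "e > 0"
    obtain N where N: "\<And>m j \<gamma>. m \<ge> N \<Longrightarrow> j \<ge> N \<Longrightarrow> cmod (s m \<gamma> - s j \<gamma>) < e"
      using s(1) e unfolding ucs_def by meson
    have "cmod (t m \<gamma> - t j \<gamma>) < e" if "m \<ge> N" "j \<ge> N" for m j \<gamma>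
    proof -
      have "t m \<gamma> - t j \<gamma> = (s m \<gamma> - s j \<gamma>) * of_real (k \<gamma>)" by (simp add: t_def algebra_simps)
      then have "cmod (t m \<gamma> - t j \<gamma>) = cmod (s m \<gamma> - s j \<gamma>) * \<bar>k \<gamma>\<bar>" by (simp add: norm_mult)
      also have "\<dots> \<le> cmod (s m \<gamma> - s j \<gamma>)" using k(4)[of \<gamma>] by (simp add: mult_left_le)
      finally show ?thesis using N[OF that, of \<gamma>] by simp
    qed
    then show "\<exists>N. \<forall>m\<ge>N. \<forall>j\<ge>N. \<forall>\<gamma>. cmod (t m \<gamma> - t j \<gamma>) < e" by blast
  qed
  moreover have "(\<lambda>j. t j \<gamma>) \<longlonglongrightarrow> n \<gamma> * of_real (k \<gamma>)" for \<gamma>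
    unfolding t_def by (intro tendsto_intros s(2))
  ultimately show ?thesis using C0_uc[OF W] by blast
qed

end


lemma cnj_diff_bound:
  fixes x y :: complex
  assumes "cmod x \<le> C" "cmod y \<le> C"
  shows "cmod (cnj x * x - cnj y * y) \<le> 2 * C * cmod (x - y)"
proof -
  have "cnj x * x - cnj y * y = cnj x * (x - y) + cnj (x - y) * y" by (simp add: algebra_simps)
  then have "cmod (cnj x * x - cnj y * y) \<le> cmod x * cmod (x - y) + cmod (x - y) * cmod y"
    by (metis complex_mod_cnj norm_mult norm_triangle_ineq)
  also have "\<dots> \<le> C * cmod (x - y) + cmod (x - y) * C"
    using assms by (intro add_mono mult_right_mono mult_left_mono) simp_all
  finally show ?thesis by simp
qed

context etl begin

lemma C0_convstar:
  assumes U: "U \<in> Bis G" and n: "n \<in> C0 G U"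
  shows "conv G (cstar G n) n \<in> C0 G (gunits G)"
proof -
  have BU: "bisl G U" using U by (rule Bis_bisl)
  obtain e where hom: "homeomorphism U (d ` U) d e" and odU: "open (d ` U)" using bis_homeo[OF U] by blast
  have ed: "\<And>x. x \<in> U \<Longrightarrow> e (d x) = x" and de: "\<And>y. y \<in> d ` U \<Longrightarrow> d (e y) = y"
    and eU: "\<And>y. y \<in> d ` U \<Longrightarrow> e y \<in> U" and ce: "continuous_on (d ` U) e"
    using hom unfolding homeomorphism_def by auto
  define Q where "Q a \<gamma> = (if \<gamma> \<in> d ` U then cnj (a (e \<gamma>)) * a (e \<gamma>) else 0)" for a :: "'a \<Rightarrow> complex" and \<gamma>
  have convQ: "conv G (cstar G a) a \<gamma> = Q a \<gamma>" if van: "\<And>z. z \<notin> U \<Longrightarrow> a z = 0" for a \<gamma>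
  proof (cases "\<gamma> \<in> d ` U")
    case True
    then have "conv G (cstar G a) a (d (e \<gamma>)) = cnj (a (e \<gamma>)) * a (e \<gamma>)"
      using conv_at[where a=a, OF BU _ eU[OF True]] van by blast
    then show ?thesis using True de[OF True] by (simp add: Q_def)
  next
    case False
    then have "\<not> (\<exists>b\<in>U. d b = \<gamma>)" by blast
    then have "conv G (cstar G a) a \<gamma> = 0" using conv_zero[where a=a, OF BU] van by blast
    then show ?thesis using False by (simp add: Q_def)
  qed
  have QCc: "Q s \<in> Cc_on (gunits G)" if s: "s \<in> Cc_on U" for s
  proof -
    let ?K = "closure {x. s x \<noteq> 0}"
    have K: "compact ?K" "?K \<subseteq> U" and cs: "continuous_on UNIV s" using s unfolding Cc_on_def by auto
    have cdK: "compact (d ` ?K)" by (rule compact_continuous_image[OF continuous_on_subset[OF cont_d] K(1)]) simp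
    have sub: "{x. Q s x \<noteq> 0} \<subseteq> d ` ?K"
    proof
      fix x assume "x \<in> {x. Q s x \<noteq> 0}"
      then have x: "x \<in> d ` U" "s (e x) \<noteq> 0" by (auto simp: Q_def split: if_splits)
      then have "e x \<in> {x. s x \<noteq> 0}" by simp
      then have "e x \<in> ?K" using closure_subset by (rule subsetD[rotated])
      then have "d (e x) \<in> d ` ?K" by (rule imageI)
      then show "x \<in> d ` ?K" using de[OF x(1)] by simp
    qed
    have c1: "continuous_on (d ` U) (Q s)"
    proof -
      have "continuous_on (d ` U) (s \<circ> e)" by (rule continuous_on_compose[OF ce continuous_on_subset[OF cs]]) simp
      then have "continuous_on (d ` U) (\<lambda>\<gamma>. cnj (s (e \<gamma>)) * s (e \<gamma>))"
        unfolding comp_def by (intro continuous_intros)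
      then show ?thesis by (rule continuous_on_cong[THEN iffD1, rotated 2]) (simp_all add: Q_def)
    qed
    have c2: "continuous_on (- (d ` ?K)) (Q s)"
    proof -
      have "Q s \<gamma> = 0" if "\<gamma> \<in> - (d ` ?K)" for \<gamma> using sub that by blast
      then show ?thesis by (intro continuous_on_eq[OF continuous_on_const[of _ 0]]) simp
    qed
    have "d ` ?K \<subseteq> d ` U" using K(2) by (rule image_mono)
    then have un: "d ` U \<union> - (d ` ?K) = UNIV" by blast
    have "continuous_on UNIV (Q s)"
      using continuous_on_open_Un[OF odU _ c1 c2] compact_imp_closed[OF cdK] un by (simp add: open_Compl)
    moreover have "d ` ?K \<subseteq> gunits G" by auto
    moreover note supp_ok[OF cdK sub this]
    ultimately show ?thesis unfolding Cc_on_def by blast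
  qed
  obtain s where s: "ucs U s" "\<And>\<gamma>. (\<lambda>k. s k \<gamma>) \<longlonglongrightarrow> n \<gamma>" using n C0_uc[OF BU] by blast
  have sCc: "\<And>k. s k \<in> Cc_on U" using s(1) unfolding ucs_def by blast
  obtain N0 where N0: "\<And>m k \<gamma>. m \<ge> N0 \<Longrightarrow> k \<ge> N0 \<Longrightarrow> cmod (s m \<gamma> - s k \<gamma>) < 1"
    using s(1) unfolding ucs_def by (meson zero_less_one)
  obtain M where M: "\<And>x. cmod (s N0 x) \<le> M" using Cc_bdd[OF sCc] by blast
  define C where "C = max M 0 + 1"
  have C: "C > 0" unfolding C_def by simp
  have sC: "cmod (s k x) \<le> C" if "k \<ge> N0" for k x
  proof -
    have "cmod (s k x) \<le> cmod (s N0 x) + cmod (s k x - s N0 x)" by (metis norm_triangle_sub add.commute)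
    also have "\<dots> \<le> M + 1" using M[of x] N0[OF that order_refl, of x] by simp
    finally show ?thesis unfolding C_def by simp
  qed
  define t where "t k = Q (s k)" for k
  have "ucs (gunits G) t"
    unfolding ucs_def
  proof (intro conjI allI impI)
    show "t k \<in> Cc_on (gunits G)" for k unfolding t_def by (rule QCc[OF sCc])
    fix \<epsilon> :: real assume \<epsilon>: "\<epsilon> > 0"
    define \<delta> where "\<delta> = \<epsilon> / (2 * C + 1)"
    have \<delta>: "\<delta> > 0" unfolding \<delta>_def using \<epsilon> C by simp
    obtain N1 where N1: "\<And>m k \<gamma>. m \<ge> N1 \<Longrightarrow> k \<ge> N1 \<Longrightarrow> cmod (s m \<gamma> - s k \<gamma>) < \<delta>"
      using s(1) \<delta> unfolding ucs_def by meson
    have "cmod (t m \<gamma> - t k \<gamma>) < \<epsilon>" if mk: "m \<ge> max N0 N1" "k \<ge> max N0 N1" for m k \<gamma>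
    proof (cases "\<gamma> \<in> d ` U")
      case False then show ?thesis using \<epsilon> by (simp add: t_def Q_def)
    next
      case True
      have "cmod (t m \<gamma> - t k \<gamma>) = cmod (cnj (s m (e \<gamma>)) * s m (e \<gamma>) - cnj (s k (e \<gamma>)) * s k (e \<gamma>))"
        using True by (simp add: t_def Q_def)
      also have "\<dots> \<le> 2 * C * cmod (s m (e \<gamma>) - s k (e \<gamma>))"
        by (rule cnj_diff_bound) (use sC mk in auto)
      also have "\<dots> \<le> 2 * C * \<delta>" using N1[of m k "e \<gamma>"] mk C by (intro mult_left_mono) auto
      also have "\<dots> < \<epsilon>" unfolding \<delta>_def using C \<epsilon> by (simp add: field_simps)
      finally show ?thesis .
    qed
    then show "\<exists>N. \<forall>m\<ge>N. \<forall>k\<ge>N. \<forall>\<gamma>. cmod (t m \<gamma> - t k \<gamma>) < \<epsilon>" by blast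
  qed
  moreover have "(\<lambda>k. t k \<gamma>) \<longlonglongrightarrow> conv G (cstar G n) n \<gamma>" for \<gamma>
  proof -
    have "conv G (cstar G n) n \<gamma> = Q n \<gamma>" by (rule convQ) (rule C0_van[OF n])
    moreover have "(\<lambda>k. t k \<gamma>) \<longlonglongrightarrow> Q n \<gamma>"
      unfolding t_def Q_def by (cases "\<gamma> \<in> d ` U") (simp_all add: tendsto_intros s(2))
    ultimately show ?thesis by simp
  qed
  ultimately show ?thesis using C0_uc[OF bisl_units] by blast
qed

end


lemma etl_of: "etale_groupoid G \<Longrightarrow> etl G"
  unfolding etl_def etl_axioms_def grpd_def etale_groupoid_def by simp

lemma claim1:
  fixes G :: "'a::t2_space groupoid" and H :: "'b::t2_space groupoid"
    and \<phi> :: "('a \<Rightarrow> complex) \<Rightarrow> ('b \<Rightarrow> complex)"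
  assumes G_etale: "etale_groupoid G" and H_etale: "etale_groupoid H"
    and phi_hom: "star_hom G H \<phi>"
    and psi: "\<forall>W\<in>Bis G. \<psi> W \<in> Bis H \<and> \<phi> ` C0 G W = C0 H (\<psi> W)"
    and sigma_eval: "\<forall>f\<in>C0 G (gunits G). \<forall>x\<in>F. \<phi> f (\<sigma> x) = f x"
    and Phi: "\<forall>\<beta>. gdom G \<beta> \<in> F \<longrightarrow> (\<forall>W\<in>Bis G. \<beta> \<in> W \<longrightarrow>
               \<Phi> \<beta> \<in> \<psi> W \<and> gdom H (\<Phi> \<beta>) = \<sigma> (gdom G \<beta>))"
    and alpha: "gdom G \<alpha> \<in> F"
    and U: "U \<in> Bis G" and aU: "\<alpha> \<in> U" and n: "n \<in> C0 G U"
  shows "cnj (\<phi> n (\<Phi> \<alpha>)) * \<phi> n (\<Phi> \<alpha>) = cnj (n \<alpha>) * n \<alpha>"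
proof -
  interpret eG: etl G using etl_of[OF G_etale] .
  interpret eH: etl H using etl_of[OF H_etale] .
  have BU: "bisl G U" using U by (rule eG.Bis_bisl)
  have nCr: "n \<in> Cr G" using n C0_mono[of U UNIV G] by blast
  have sCr: "cstar G n \<in> Cr G" using eG.C0_cstar[OF BU n] C0_mono[of "ginv G ` U" UNIV G] by blast
  have c: "conv G (cstar G n) n \<in> C0 G (gunits G)" by (rule eG.C0_convstar[OF U n])
  have hom1: "\<phi> (conv G (cstar G n) n) = conv H (\<phi> (cstar G n)) (\<phi> n)"
    using phi_hom sCr nCr unfolding star_hom_def by blast
  have hom2: "\<phi> (cstar G n) = cstar H (\<phi> n)" using phi_hom nCr unfolding star_hom_def by blast
  have ev: "\<phi> (conv G (cstar G n) n) (\<sigma> (gdom G \<alpha>)) = conv G (cstar G n) n (gdom G \<alpha>)"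
    using sigma_eval c alpha by blast
  have cG: "conv G (cstar G n) n (gdom G \<alpha>) = cnj (n \<alpha>) * n \<alpha>"
    by (rule eG.conv_at[OF BU _ aU]) (rule C0_van[OF n])
  have psiU: "\<psi> U \<in> Bis H" "\<phi> ` C0 G U = C0 H (\<psi> U)" using psi U by auto
  have PhiU: "\<Phi> \<alpha> \<in> \<psi> U" "gdom H (\<Phi> \<alpha>) = \<sigma> (gdom G \<alpha>)" using Phi alpha U aU by auto
  have m: "\<phi> n \<in> C0 H (\<psi> U)" using psiU(2) n by blast
  have cH: "conv H (cstar H (\<phi> n)) (\<phi> n) (gdom H (\<Phi> \<alpha>)) = cnj (\<phi> n (\<Phi> \<alpha>)) * \<phi> n (\<Phi> \<alpha>)"
    by (rule eH.conv_at[OF eH.Bis_bisl[OF psiU(1)] _ PhiU(1)]) (rule C0_van[OF m])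
  show ?thesis using ev cG cH hom1 hom2 PhiU(2) by simp
qed

lemma phi_lin:
  assumes phi_hom: "star_hom G H \<phi>" and a: "a \<in> Cr G" and b: "b \<in> Cr G"
    and sa: "(\<lambda>\<gamma>. x * a \<gamma>) \<in> Cr G" and sb: "(\<lambda>\<gamma>. y * b \<gamma>) \<in> Cr G"
  shows "\<phi> (\<lambda>\<gamma>. x * a \<gamma> + y * b \<gamma>) = (\<lambda>\<delta>. x * \<phi> a \<delta> + y * \<phi> b \<delta>)"
proof -
  have "\<phi> (\<lambda>\<gamma>. x * a \<gamma> + y * b \<gamma>) = (\<lambda>\<delta>. \<phi> (\<lambda>\<gamma>. x * a \<gamma>) \<delta> + \<phi> (\<lambda>\<gamma>. y * b \<gamma>) \<delta>)"
  proof -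
    have add: "\<forall>a\<in>Cr G. \<forall>b\<in>Cr G. \<phi> (\<lambda>\<gamma>. a \<gamma> + b \<gamma>) = (\<lambda>\<delta>. \<phi> a \<delta> + \<phi> b \<delta>)"
      using phi_hom unfolding star_hom_def by blast
    show ?thesis using add[rule_format, OF sa sb] by simp
  qed
  moreover have "\<phi> (\<lambda>\<gamma>. x * a \<gamma>) = (\<lambda>\<delta>. x * \<phi> a \<delta>)" using phi_hom a unfolding star_hom_def by blast
  moreover have "\<phi> (\<lambda>\<gamma>. y * b \<gamma>) = (\<lambda>\<delta>. y * \<phi> b \<delta>)" using phi_hom b unfolding star_hom_def by blast
  ultimately show ?thesis by simp
qed

lemma claim2:
  fixes G :: "'a::t2_space groupoid" and H :: "'b::t2_space groupoid"
    and \<phi> :: "('a \<Rightarrow> complex) \<Rightarrow> ('b \<Rightarrow> complex)"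
  assumes G_etale: "etale_groupoid G" and H_etale: "etale_groupoid H"
    and phi_hom: "star_hom G H \<phi>"
    and psi: "\<forall>W\<in>Bis G. \<psi> W \<in> Bis H \<and> \<phi> ` C0 G W = C0 H (\<psi> W)"
    and sigma_eval: "\<forall>f\<in>C0 G (gunits G). \<forall>x\<in>F. \<phi> f (\<sigma> x) = f x"
    and Phi: "\<forall>\<beta>. gdom G \<beta> \<in> F \<longrightarrow> (\<forall>W\<in>Bis G. \<beta> \<in> W \<longrightarrow>
               \<Phi> \<beta> \<in> \<psi> W \<and> gdom H (\<Phi> \<beta>) = \<sigma> (gdom G \<beta>))"
    and alpha: "gdom G \<alpha> \<in> F"
    and U: "U \<in> Bis G" and aU: "\<alpha> \<in> U" and a: "a \<in> C0 G U" and b: "b \<in> C0 G U"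
  shows "\<phi> a (\<Phi> \<alpha>) * b \<alpha> = \<phi> b (\<Phi> \<alpha>) * a \<alpha>"
proof -
  interpret eG: etl G using etl_of[OF G_etale] .
  have BU: "bisl G U" using U by (rule eG.Bis_bisl)
  have sc: "(\<lambda>\<gamma>. x * f \<gamma>) \<in> C0 G U" if "f \<in> C0 G U" for x f
    using eG.C0_lin[OF BU that that, of x 0] by simp
  have toCr: "f \<in> Cr G" if "f \<in> C0 G U" for f using that C0_mono[of U UNIV G] by blast
  define c where "c = (\<lambda>\<gamma>. b \<alpha> * a \<gamma> + (- a \<alpha>) * b \<gamma>)"
  have c: "c \<in> C0 G U" unfolding c_def by (rule eG.C0_lin[OF BU a b])
  have c0: "c \<alpha> = 0" unfolding c_def by simp
  have "cnj (\<phi> c (\<Phi> \<alpha>)) * \<phi> c (\<Phi> \<alpha>) = 0"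
    using claim1[OF G_etale H_etale phi_hom psi sigma_eval Phi alpha U aU c] c0 by simp
  then have "\<phi> c (\<Phi> \<alpha>) = 0" by simp
  moreover have "\<phi> c = (\<lambda>\<delta>. b \<alpha> * \<phi> a \<delta> + (- a \<alpha>) * \<phi> b \<delta>)"
    unfolding c_def by (rule phi_lin[OF phi_hom toCr[OF a] toCr[OF b] toCr[OF sc[OF a]] toCr[OF sc[OF b]]])
  ultimately show ?thesis by (simp add: algebra_simps)
qed



theorem mainTheorem6:
  fixes G :: "'a::t2_space groupoid" and H :: "'b::t2_space groupoid"
    and \<phi> :: "('a \<Rightarrow> complex) \<Rightarrow> ('b \<Rightarrow> complex)"
    and F :: "'a set" and \<psi> :: "'a set \<Rightarrow> 'b set" and \<sigma> :: "'a \<Rightarrow> 'b" and V :: "'b set"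
    and \<Phi> :: "'a \<Rightarrow> 'b"
    and \<alpha> :: 'a and U :: "'a set" and n :: "'a \<Rightarrow> complex"
  assumes G_etale: "etale_groupoid G"
    and H_etale: "etale_groupoid H"
    and H_eff: "effective H"
    and phi_hom: "star_hom G H \<phi>"
    and phi_units: "\<phi> ` C0 G (gunits G) \<subseteq> C0 H (gunits H)"
    and phi_ideal: "\<forall>a\<in>\<phi> ` C0 G (gunits G). \<forall>b\<in>C0 H (gunits H).
                      conv H b a \<in> \<phi> ` C0 G (gunits G)"
    \<comment> \<open>F: the closed invariant set with ker phi \<inter> C_0(G0) = C_0(G0 \ F)\<close>
    and F_units: "F \<subseteq> gunits G" and F_closed: "closed F"
    and F_inv: "\<forall>g. gdom G g \<in> F \<longleftrightarrow> gran G g \<in> F"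
    and F_ker: "{a \<in> C0 G (gunits G). \<phi> a = (\<lambda>_. 0)} = C0 G (gunits G - F)"
    \<comment> \<open>psi: phi(C_0(U)) = C_0(psi(U)) for open bisections U\<close>
    and psi: "\<forall>W\<in>Bis G. \<psi> W \<in> Bis H \<and> \<phi> ` C0 G W = C0 H (\<psi> W)"
    \<comment> \<open>sigma: homeomorphism of F onto the open set V with phi(C_0(G0)) = C_0(V)\<close>
    and V_open: "open V" and V_units: "V \<subseteq> gunits H"
    and sigma_homeo: "\<exists>\<tau>. homeomorphism F V \<sigma> \<tau>"
    and phi_V: "\<phi> ` C0 G (gunits G) = C0 H V"
    and sigma_eval: "\<forall>f\<in>C0 G (gunits G). \<forall>x\<in>F. \<phi> f (\<sigma> x) = f x"
    \<comment> \<open>Phi on G_F = d^{-1}(F)\<close>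
    and Phi: "\<forall>\<beta>. gdom G \<beta> \<in> F \<longrightarrow> (\<forall>W\<in>Bis G. \<beta> \<in> W \<longrightarrow>
               \<Phi> \<beta> \<in> \<psi> W \<and> gdom H (\<Phi> \<beta>) = \<sigma> (gdom G \<beta>))"
    \<comment> \<open>the data of the theorem\<close>
    and alpha: "gdom G \<alpha> \<in> F"
    and U: "U \<in> Bis G" and alpha_U: "\<alpha> \<in> U"
    and n: "n \<in> C0 G U" and n_alpha: "n \<alpha> \<noteq> 0"
  shows "cmod (\<phi> n (\<Phi> \<alpha>)) = cmod (n \<alpha>) \<and>
         (\<forall>U' n'. U' \<in> Bis G \<longrightarrow> \<alpha> \<in> U' \<longrightarrow> n' \<in> C0 G U' \<longrightarrow> n' \<alpha> \<noteq> 0 \<longrightarrow>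
            \<phi> n' (\<Phi> \<alpha>) / n' \<alpha> = \<phi> n (\<Phi> \<alpha>) / n \<alpha>)"
proof -
  interpret eG: etl G using etl_of[OF G_etale] .
  have c1: "cnj (\<phi> n (\<Phi> \<alpha>)) * \<phi> n (\<Phi> \<alpha>) = cnj (n \<alpha>) * n \<alpha>"
    by (rule claim1[OF G_etale H_etale phi_hom psi sigma_eval Phi alpha U alpha_U n])
  have "complex_of_real ((cmod (\<phi> n (\<Phi> \<alpha>)))\<^sup>2) = complex_of_real ((cmod (n \<alpha>))\<^sup>2)"
    using c1 by (simp only: complex_norm_square mult.commute)
  then have "(cmod (\<phi> n (\<Phi> \<alpha>)))\<^sup>2 = (cmod (n \<alpha>))\<^sup>2" by (simp only: of_real_eq_iff)
  then have part1: "cmod (\<phi> n (\<Phi> \<alpha>)) = cmod (n \<alpha>)" by (simp add: power2_eq_iff_nonneg)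
  have part2: "\<phi> n' (\<Phi> \<alpha>) / n' \<alpha> = \<phi> n (\<Phi> \<alpha>) / n \<alpha>"
    if U': "U' \<in> Bis G" "\<alpha> \<in> U'" and n': "n' \<in> C0 G U'" "n' \<alpha> \<noteq> 0" for U' n'
  proof -
    define W where "W = U \<inter> U'"
    have W: "W \<in> Bis G" using U U'(1) unfolding W_def Bis_def by (auto intro: inj_on_subset)
    have aW: "\<alpha> \<in> W" using alpha_U U'(2) unfolding W_def by simp
    have BU: "bisl G U" "bisl G U'" "bisl G W" using U U'(1) W by (simp_all add: eG.Bis_bisl)
    have oW: "open W" using W unfolding Bis_def by simp
    obtain k :: "'a \<Rightarrow> real" where k: "continuous_on UNIV k" "k \<alpha> = 1" "\<And>x. \<bar>k x\<bar> \<le> 1"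
      "compact (closure {x. k x \<noteq> 0})" "closure {x. k x \<noteq> 0} \<subseteq> W"
      using cutoff[OF eG.lcs oW aW] by blast
    define nW where "nW = (\<lambda>\<gamma>. n \<gamma> * of_real (k \<gamma>))"
    define n'W where "n'W = (\<lambda>\<gamma>. n' \<gamma> * of_real (k \<gamma>))"
    have nW: "nW \<in> C0 G W" unfolding nW_def by (rule eG.C0_cut[OF BU(1) BU(3) n k(1) k(4) k(5) k(3)])
    have n'W: "n'W \<in> C0 G W" unfolding n'W_def by (rule eG.C0_cut[OF BU(2) BU(3) n'(1) k(1) k(4) k(5) k(3)])
    have WU: "W \<subseteq> U" "W \<subseteq> U'" unfolding W_def by auto
    have nWU: "nW \<in> C0 G U" using nW C0_mono[OF WU(1)] by blast
    have n'WU: "n'W \<in> C0 G U'" using n'W C0_mono[OF WU(2)] by blast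
    have va: "nW \<alpha> = n \<alpha>" "n'W \<alpha> = n' \<alpha>" unfolding nW_def n'W_def using k(2) by simp_all
    have e1: "\<phi> n (\<Phi> \<alpha>) * nW \<alpha> = \<phi> nW (\<Phi> \<alpha>) * n \<alpha>"
      by (rule claim2[OF G_etale H_etale phi_hom psi sigma_eval Phi alpha U alpha_U n nWU])
    have e2: "\<phi> n' (\<Phi> \<alpha>) * n'W \<alpha> = \<phi> n'W (\<Phi> \<alpha>) * n' \<alpha>"
      by (rule claim2[OF G_etale H_etale phi_hom psi sigma_eval Phi alpha U'(1) U'(2) n'(1) n'WU])
    have e3: "\<phi> nW (\<Phi> \<alpha>) * n'W \<alpha> = \<phi> n'W (\<Phi> \<alpha>) * nW \<alpha>"
      by (rule claim2[OF G_etale H_etale phi_hom psi sigma_eval Phi alpha W aW nW n'W])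
    have f1: "\<phi> nW (\<Phi> \<alpha>) = \<phi> n (\<Phi> \<alpha>)" using e1 va n_alpha by simp
    have f2: "\<phi> n'W (\<Phi> \<alpha>) = \<phi> n' (\<Phi> \<alpha>)" using e2 va n'(2) by simp
    have "\<phi> n (\<Phi> \<alpha>) * n' \<alpha> = \<phi> n' (\<Phi> \<alpha>) * n \<alpha>" using e3 f1 f2 va by simp
    then show ?thesis using n_alpha n'(2) by (simp add: field_simps)
  qed
  show ?thesis using part1 part2 by blast
qed


end
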